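(* Let $(C_k)_{k\in\mathbb{N}}$ be a sequence of bivariate copulas satisfying the standing assumption below, and suppose every $C_k$ is exchangeable, i.e. $C_k(u,v)=C_k(v,u)$ for all $u,v\in(0,1)$. Then: (i) for every $k\in\mathbb{N}$ and all $(\mathbf{u},x)\in(0,1)^k\times(0,1)$ the Rosenblatt functions satisfy $R^{(2)}_k(\overline{\mathbf{u}},x)=R^{(1)}_k(\mathbf{u},x)$; (ii) the s-vine copula process associated with $(C_k)_{k\in\mathbb{N}}$ is reversible, i.e. for every $n\ge 2$ the $n$-dimensional copula satisfies $C_{(n)}(\mathbf{u})=C_{(n)}(\overline{\mathbf{u}})$ for all $\mathbf{u}\in(0,1)^n$.
   Context: Standing assumption: each bivariate copula $C_k$ is $C^\infty$ on $(0,1)^2$ and has a density $c_k$ that is strictly positive on $(0,1)^2$. Write $h_k^{(1)}(u_1,u_2)=\partial C_k(u_1,u_2)/\partial u_1$ and $h_k^{(2)}(u_1,u_2)=\partial C_k(u_1,u_2)/\partial u_2$. For $\mathbf{u}=(u_1,\dots,u_k)^\top$, $\mathbf{u}_{-i}$ denotes $\mathbf{u}$ with its $i$th component removed, $\mathbf{u}_{[a,b]}=(u_a,\dots,u_b)^\top$, and $\overline{\mathbf{u}}=(u_k,\dots,u_1)^\top$ is the reversed vector. The forward and backward Rosenblatt functions $R^{(1)}_k,R^{(2)}_k:(0,1)^k\times(0,1)\to(0,1)$ are defined by $R^{(1)}_1(u,x)=h_1^{(1)}(u,x)$, $R^{(2)}_1(u,x)=h_1^{(2)}(x,u)$ and,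 for $k\ge 2$, $R^{(1)}_k(\mathbf{u},x)=h_k^{(1)}\big(R^{(2)}_{k-1}(\mathbf{u}_{-1},u_1),R^{(1)}_{k-1}(\mathbf{u}_{-1},x)\big)$, $R^{(2)}_k(\mathbf{u},x)=h_k^{(2)}\big(R^{(2)}_{k-1}(\mathbf{u}_{-k},x),R^{(1)}_{k-1}(\mathbf{u}_{-k},u_k)\big)$; by convention $R^{(1)}_0(\cdot,u)=R^{(2)}_0(\cdot,u)=u$. For $n\ge2$, $C_{(n)}$ is the $n$-dimensional copula with density $c_{(n)}(u_1,\dots,u_n)=\prod_{k=1}^{n-1}\prod_{j=k+1}^{n}c_k\big(R^{(2)}_{k-1}(\mathbf{u}_{[j-k+1,j-1]},u_{j-k}),R^{(1)}_{k-1}(\mathbf{u}_{[j-k+1,j-1]},u_j)\big)$. An s-vine copula process associated with $(C_k)$ is a strictly stationary process $(U_t)_{t\in\mathbb{Z}}$ with standard uniform margins such that for every $t$ and $n\ge2$, $(U_t,\dots,U_{t+n-1})$ has distribution function $C_{(n)}$. *)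

theory Defs
  imports "HOL-Analysis.Analysis" "HOL-Probability.Probability"
begin

definition is_copula2 :: "(real \<Rightarrow> real \<Rightarrow> real) \<Rightarrow> bool" where
  "is_copula2 C \<longleftrightarrow>
     (\<forall>u\<in>{0..1}. C u 0 = 0 \<and> C 0 u = 0 \<and> C u 1 = u \<and> C 1 u = u) \<and>
     (\<forall>u1 u2 v1 v2. 0 \<le> u1 \<and> u1 \<le> u2 \<and> u2 \<le> 1 \<and> 0 \<le> v1 \<and> v1 \<le> v2 \<and> v2 \<le> 1 \<longrightarrow>
        C u2 v2 - C u2 v1 - C u1 v2 + C u1 v1 \<ge> 0)"

definition pd1 :: "(real \<Rightarrow> real \<Rightarrow> real) \<Rightarrow> real \<Rightarrow> real \<Rightarrow> real" where
  "pd1 f u v = deriv (\<lambda>s. f s v) u"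

definition pd2 :: "(real \<Rightarrow> real \<Rightarrow> real) \<Rightarrow> real \<Rightarrow> real \<Rightarrow> real" where
  "pd2 f u v = deriv (\<lambda>s. f u s) v"

fun iter_pd :: "bool list \<Rightarrow> (real \<Rightarrow> real \<Rightarrow> real) \<Rightarrow> real \<Rightarrow> real \<Rightarrow> real" where
  "iter_pd [] f = f"
| "iter_pd (b # bs) f = (if b then pd1 else pd2) (iter_pd bs f)"

definition smooth_on_unit_sq :: "(real \<Rightarrow> real \<Rightarrow> real) \<Rightarrow> bool" where
  "smooth_on_unit_sq f \<longleftrightarrow>
     (\<forall>ds. \<forall>u\<in>{0<..<1}. \<forall>v\<in>{0<..<1}.
        (\<lambda>p. iter_pd ds f (fst p) (snd p)) differentiable (at (u, v)))"

definition copula_density :: "(real \<Rightarrow> real \<Rightarrow> real) \<Rightarrow> real \<Rightarrow> real \<Rightarrow> real" where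
  "copula_density f = pd2 (pd1 f)"

definition h1 :: "(nat \<Rightarrow> real \<Rightarrow> real \<Rightarrow> real) \<Rightarrow> nat \<Rightarrow> real \<Rightarrow> real \<Rightarrow> real" where
  "h1 C k = pd1 (C k)"

definition h2 :: "(nat \<Rightarrow> real \<Rightarrow> real \<Rightarrow> real) \<Rightarrow> nat \<Rightarrow> real \<Rightarrow> real \<Rightarrow> real" where
  "h2 C k = pd2 (C k)"

text \<open>Rosenblatt functions: rosen C True k u x = R^(1)_k(u,x),
  rosen C False k u x = R^(2)_k(u,x); the vector u is a list of length k.
  For k = 1 the general recursion reduces to R^(1)_1(u,x) = h_1^(1)(u,x),
  R^(2)_1(u,x) = h_1^(2)(x,u) by the convention R_0(.,u) = u.\<close>
fun rosen :: "(nat \<Rightarrow> real \<Rightarrow> real \<Rightarrow> real) \<Rightarrow> bool \<Rightarrow> nat \<Rightarrow> real list \<Rightarrow> real \<Rightarrow> real" where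
  "rosen C b 0 u x = x"
| "rosen C True (Suc k) u x =
     h1 C (Suc k) (rosen C False k (tl u) (hd u)) (rosen C True k (tl u) x)"
| "rosen C False (Suc k) u x =
     h2 C (Suc k) (rosen C False k (butlast u) x) (rosen C True k (butlast u) (last u))"

text \<open>Density c_(n) of the n-dimensional s-vine copula, n = length u (1-based
  component u_i is u ! (i-1); u_[j-k+1, j-1] = take (k-1) (drop (j-k) u)).\<close>
definition svine_density :: "(nat \<Rightarrow> real \<Rightarrow> real \<Rightarrow> real) \<Rightarrow> real list \<Rightarrow> real" where
  "svine_density C u =
     (\<Prod>k\<in>{1..<length u}. \<Prod>j\<in>{k+1..length u}.
        copula_density (C k)
          (rosen C False (k - 1) (take (k - 1) (drop (j - k) u)) (u ! (j - k - 1)))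
          (rosen C True (k - 1) (take (k - 1) (drop (j - k) u)) (u ! (j - 1))))"

text \<open>The n-dimensional copula C_(n) (distribution function with density c_(n)),
  evaluated at u (n = length u): integral of c_(n) over the box (0,u].\<close>
definition svine_cdf :: "(nat \<Rightarrow> real \<Rightarrow> real \<Rightarrow> real) \<Rightarrow> real list \<Rightarrow> ennreal" where
  "svine_cdf C u =
     (\<integral>\<^sup>+ x. indicator {x. \<forall>i<length u. x i \<in> {0<..u ! i}} x *
              ennreal (svine_density C (map x [0..<length u]))
        \<partial>(PiM {..<length u} (\<lambda>_. lborel)))"

end

theory Submission
  imports Defs
begin

lemma deriv_local:
  fixes f g :: "real \<Rightarrow> real"
  assumes "open S" "x \<in> S" "\<And>y. y \<in> S \<Longrightarrow> f y = g y"
  shows "deriv f x = deriv g x"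
proof -
  have "\<And>D. DERIV f x :> D \<longleftrightarrow> DERIV g x :> D"
    using assms has_field_derivative_transform_within_open[of _ _ x S] by metis
  then show ?thesis unfolding deriv_def by simp
qed

lemma partial_DERIV:
  fixes F :: "real \<Rightarrow> real \<Rightarrow> real"
  assumes "(\<lambda>p. F (fst p) (snd p)) differentiable (at (s, t))"
  shows "DERIV (\<lambda>x. F x t) s :> pd1 F s t" "DERIV (\<lambda>y. F s y) t :> pd2 F s t"
proof -
  have "(\<lambda>x. (x, t)) differentiable (at s)"
    by (auto intro!: derivative_intros simp: differentiable_def)
  then have "((\<lambda>p. F (fst p) (snd p)) \<circ> (\<lambda>x. (x, t))) differentiable (at s)"
    using assms by (intro differentiable_chain_at) auto
  then have "(\<lambda>x. F x t) differentiable (at s)" by (simp add: o_def)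
  then show "DERIV (\<lambda>x. F x t) s :> pd1 F s t"
    unfolding pd1_def using DERIV_deriv_iff_real_differentiable by blast
  have "(\<lambda>y. (s, y)) differentiable (at t)"
    by (auto intro!: derivative_intros simp: differentiable_def)
  then have "((\<lambda>p. F (fst p) (snd p)) \<circ> (\<lambda>y. (s, y))) differentiable (at t)"
    using assms by (intro differentiable_chain_at) auto
  then have "(\<lambda>y. F s y) differentiable (at t)" by (simp add: o_def)
  then show "DERIV (\<lambda>y. F s y) t :> pd2 F s t"
    unfolding pd2_def using DERIV_deriv_iff_real_differentiable by blast
qed

locale gcop =
  fixes C :: "real \<Rightarrow> real \<Rightarrow> real"
  assumes cop: "is_copula2 C"
    and sm: "smooth_on_unit_sq C"
    and dp: "\<And>u v. u \<in> {0<..<1} \<Longrightarrow> v \<in> {0<..<1} \<Longrightarrow> copula_density C u v > 0"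
    and ex: "\<And>u v. u \<in> {0<..<1} \<Longrightarrow> v \<in> {0<..<1} \<Longrightarrow> C u v = C v u"
begin

lemma diffi: "u \<in> {0<..<1} \<Longrightarrow> v \<in> {0<..<1} \<Longrightarrow>
   (\<lambda>p. iter_pd ds C (fst p) (snd p)) differentiable (at (u, v))"
  using sm unfolding smooth_on_unit_sq_def by blast

lemma D1: "u \<in> {0<..<1} \<Longrightarrow> v \<in> {0<..<1} \<Longrightarrow> DERIV (\<lambda>x. C x v) u :> pd1 C u v"
  using partial_DERIV(1)[OF diffi[of u v "[]"]] by simp

lemma D1' : "u \<in> {0<..<1} \<Longrightarrow> v \<in> {0<..<1} \<Longrightarrow> DERIV (\<lambda>y. pd1 C u y) v :> pd2 (pd1 C) u v"
  using partial_DERIV(2)[OF diffi[of u v "[True]"]] by simp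

lemma bd0: "0 \<le> u1 \<Longrightarrow> u1 \<le> u2 \<Longrightarrow> u2 \<le> 1 \<Longrightarrow> 0 \<le> v1 \<Longrightarrow> v1 \<le> v2 \<Longrightarrow> v2 \<le> 1 \<Longrightarrow>
   C u2 v2 - C u2 v1 - C u1 v2 + C u1 v1 \<ge> 0"
  using cop unfolding is_copula2_def by blast

lemma bdry: "u \<in> {0..1} \<Longrightarrow> C u 0 = 0 \<and> C 0 u = 0 \<and> C u 1 = u \<and> C 1 u = u"
  using cop unfolding is_copula2_def by blast

lemma quot_bounds:
  assumes u: "u \<in> {0..1}" and s: "s \<in> {0..1}" and v: "v \<in> {0..1}" and ne: "s \<noteq> u"
  shows "0 \<le> (C s v - C u v) / (s - u) \<and> (C s v - C u v) / (s - u) \<le> 1"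
proof -
  have s0: "C s 0 = 0" "C s 1 = s" using bdry[OF s] by auto
  have u0: "C u 0 = 0" "C u 1 = u" using bdry[OF u] by auto
  show ?thesis
  proof (cases "u < s")
    case True
    have a: "C s v - C u v \<ge> 0" using bd0[of u s 0 v] s0 u0 u s v True by simp
    have b: "C s v - C u v \<le> s - u" using bd0[of u s v 1] s0 u0 u s v True by simp
    show ?thesis using a b True by (simp add: divide_le_eq_1)
  next
    case False
    then have F: "s < u" using ne by auto
    have a: "C u v - C s v \<ge> 0" using bd0[of s u 0 v] s0 u0 u s v F by simp
    have b: "C u v - C s v \<le> u - s" using bd0[of s u v 1] s0 u0 u s v F by simp
    have eq: "(C s v - C u v) / (s - u) = (C u v - C s v) / (u - s)"
      by (metis minus_diff_eq minus_divide_divide)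
    show ?thesis unfolding eq using a b F by (simp add: divide_le_eq_1)
  qed
qed

lemma quot_mono:
  assumes u: "u \<in> {0..1}" and s: "s \<in> {0..1}" and v: "v \<in> {0..1}" and v': "v' \<in> {0..1}"
    and vv: "v' \<le> v" and ne: "s \<noteq> u"
  shows "(C s v' - C u v') / (s - u) \<le> (C s v - C u v) / (s - u)"
proof (cases "u < s")
  case True
  have a: "C s v' - C u v' \<le> C s v - C u v" using bd0[of u s v' v] u s v v' vv True by auto
  show ?thesis using a True by (simp add: divide_right_mono)
next
  case False
  then have F: "s < u" using ne by auto
  have a: "C u v' - C s v' \<le> C u v - C s v" using bd0[of s u v' v] u s v v' vv F by auto
  have eq: "\<And>w. (C s w - C u w) / (s - u) = (C u w - C s w) / (u - s)"
    by (metis minus_diff_eq minus_divide_divide)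
  show ?thesis unfolding eq using a F by (simp add: divide_right_mono)
qed

lemma quot_tendsto: "u \<in> {0<..<1} \<Longrightarrow> v \<in> {0<..<1} \<Longrightarrow>
   ((\<lambda>s. (C s v - C u v) / (s - u)) \<longlongrightarrow> pd1 C u v) (at u)"
  using D1[of u v] by (simp add: has_field_derivative_iff)

lemma ev_unit: "(u::real) \<in> {0<..<1} \<Longrightarrow> eventually (\<lambda>s. s \<in> {0<..<1} - {u}) (at u)"
  by (rule eventually_at_in_open) (auto simp: open_greaterThanLessThan)

lemma h1_bounds:
  assumes u: "u \<in> {0<..<1}" and v: "v \<in> {0<..<1}"
  shows "0 \<le> pd1 C u v \<and> pd1 C u v \<le> 1"
proof
  show "0 \<le> pd1 C u v"
    using quot_tendsto[OF u v] apply (rule tendsto_lowerbound)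
    using ev_unit[OF u] apply eventually_elim using quot_bounds u v apply auto[1]
    by simp
  show "pd1 C u v \<le> 1"
    using quot_tendsto[OF u v] apply (rule tendsto_upperbound)
    using ev_unit[OF u] apply eventually_elim using quot_bounds u v apply auto[1]
    by simp
qed

lemma h1_mono:
  assumes u: "u \<in> {0<..<1}" and v: "v \<in> {0<..<1}" and v': "v' \<in> {0<..<1}" and vv: "v' \<le> v"
  shows "pd1 C u v' \<le> pd1 C u v"
proof -
  show ?thesis
    apply (rule tendsto_le[OF _ quot_tendsto[OF u v] quot_tendsto[OF u v']])
     apply simp
    using ev_unit[OF u] apply eventually_elim using quot_mono u v v' vv by auto
qed

lemma h1_strict:
  assumes u: "u \<in> {0<..<1}" and v: "v \<in> {0<..<1}"
  shows "0 < pd1 C u v \<and> pd1 C u v < 1"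
proof
  show "0 < pd1 C u v"
  proof (rule ccontr)
    assume "\<not> 0 < pd1 C u v"
    then have z: "pd1 C u v = 0" using h1_bounds[OF u v] by auto
    have eq: "\<And>t. t \<in> {0<..<v} \<Longrightarrow> pd1 C u t = 0"
    proof -
      fix t assume t: "t \<in> {0<..<v}"
      then have "t \<in> {0<..<1}" using v by auto
      then show "pd1 C u t = 0" using h1_bounds[OF u] h1_mono[OF u v, of t] z t by force
    qed
    have "deriv (\<lambda>t. pd1 C u t) (v/2) = deriv (\<lambda>t. 0) (v/2)"
      by (rule deriv_local[of "{0<..<v}"]) (use v eq in auto)
    moreover have "deriv (\<lambda>t. pd1 C u t) (v/2) = copula_density C u (v/2)"
      unfolding copula_density_def pd2_def ..
    moreover have "copula_density C u (v/2) > 0" using dp u v by auto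
    ultimately show False by simp
  qed
  show "pd1 C u v < 1"
  proof (rule ccontr)
    assume "\<not> pd1 C u v < 1"
    then have z: "pd1 C u v = 1" using h1_bounds[OF u v] by auto
    have eq: "\<And>t. t \<in> {v<..<1} \<Longrightarrow> pd1 C u t = 1"
    proof -
      fix t assume t: "t \<in> {v<..<1}"
      then have "t \<in> {0<..<1}" using v by auto
      then show "pd1 C u t = 1" using h1_bounds[OF u] h1_mono[OF u _ v, of t] z t by force
    qed
    have "deriv (\<lambda>t. pd1 C u t) ((v+1)/2) = deriv (\<lambda>t. 1) ((v+1)/2)"
      by (rule deriv_local[of "{v<..<1}"]) (use v eq in auto)
    moreover have "deriv (\<lambda>t. pd1 C u t) ((v+1)/2) = copula_density C u ((v+1)/2)"
      unfolding copula_density_def pd2_def ..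
    moreover have "copula_density C u ((v+1)/2) > 0" using dp u v by auto
    ultimately show False by simp
  qed
qed

lemma h_swap: "p \<in> {0<..<1} \<Longrightarrow> q \<in> {0<..<1} \<Longrightarrow> pd2 C p q = pd1 C q p"
  unfolding pd1_def pd2_def by (rule deriv_local[of "{0<..<1}"]) (auto simp: ex)

lemma D2: "u \<in> {0<..<1} \<Longrightarrow> v \<in> {0<..<1} \<Longrightarrow> DERIV (\<lambda>y. C u y) v :> pd2 C u v"
  using partial_DERIV(2)[OF diffi[of u v "[]"]] by simp

lemma D2': "u \<in> {0<..<1} \<Longrightarrow> v \<in> {0<..<1} \<Longrightarrow> DERIV (\<lambda>x. pd2 C x v) u :> pd1 (pd2 C) u v"
  using partial_DERIV(1)[OF diffi[of u v "[False]"]] by simp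

lemma contA: "u \<in> {0<..<1} \<Longrightarrow> v \<in> {0<..<1} \<Longrightarrow>
   continuous (at (u, v)) (\<lambda>z. pd2 (pd1 C) (fst z) (snd z))"
  using differentiable_imp_continuous_within[OF diffi[of u v "[False, True]"]] by simp

lemma contB: "u \<in> {0<..<1} \<Longrightarrow> v \<in> {0<..<1} \<Longrightarrow>
   continuous (at (u, v)) (\<lambda>z. pd1 (pd2 C) (fst z) (snd z))"
  using differentiable_imp_continuous_within[OF diffi[of u v "[True, False]"]] by simp

lemma mvt_step:
  assumes p: "p \<in> {0<..<1}" and q: "q \<in> {0<..<1}" and h: "0 < h" "p + h < 1" "q + h < 1"
  shows "\<exists>x y x' y'. x \<in> {p<..<p+h} \<and> y \<in> {q<..<q+h} \<and> x' \<in> {p<..<p+h} \<and> y' \<in> {q<..<q+h}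
          \<and> pd2 (pd1 C) x y = pd1 (pd2 C) x' y'"
proof -
  define \<Delta> where "\<Delta> = C (p+h) (q+h) - C (p+h) q - C p (q+h) + C p q"
  have inI: "\<And>s. p \<le> s \<Longrightarrow> s \<le> p + h \<Longrightarrow> s \<in> {0<..<1}" using p h by auto
  have inJ: "\<And>t. q \<le> t \<Longrightarrow> t \<le> q + h \<Longrightarrow> t \<in> {0<..<1}" using q h by auto
  have qh: "q + h \<in> {0<..<1}" "p + h \<in> {0<..<1}" using p q h by auto
  have "\<exists>z. p < z \<and> z < p + h \<and> ((\<lambda>s. C s (q+h) - C s q) (p+h) - (\<lambda>s. C s (q+h) - C s q) p
          = (p + h - p) * (\<lambda>s. pd1 C s (q+h) - pd1 C s q) z)"
    by (rule MVT2) (use h inI qh q in \<open>auto intro!: DERIV_diff D1\<close>)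
  then obtain x where x: "p < x" "x < p + h"
    and ex1: "(C (p+h) (q+h) - C (p+h) q) - (C p (q+h) - C p q) = h * (pd1 C x (q+h) - pd1 C x q)"
    by auto
  have "\<exists>z. q < z \<and> z < q + h \<and> ((\<lambda>t. pd1 C x t) (q+h) - (\<lambda>t. pd1 C x t) q
          = (q + h - q) * (\<lambda>t. pd2 (pd1 C) x t) z)"
    by (rule MVT2) (use h inJ inI x in \<open>auto intro!: D1'\<close>)
  then obtain y where y: "q < y" "y < q + h"
    and ex2: "pd1 C x (q+h) - pd1 C x q = h * pd2 (pd1 C) x y"
    by auto
  have "\<exists>z. q < z \<and> z < q + h \<and> ((\<lambda>t. C (p+h) t - C p t) (q+h) - (\<lambda>t. C (p+h) t - C p t) q
          = (q + h - q) * (\<lambda>t. pd2 C (p+h) t - pd2 C p t) z)"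
    by (rule MVT2) (use h inJ qh p in \<open>auto intro!: DERIV_diff D2\<close>)
  then obtain y' where y': "q < y'" "y' < q + h"
    and ex3: "(C (p+h) (q+h) - C p (q+h)) - (C (p+h) q - C p q) = h * (pd2 C (p+h) y' - pd2 C p y')"
    by auto
  have "\<exists>z. p < z \<and> z < p + h \<and> ((\<lambda>s. pd2 C s y') (p+h) - (\<lambda>s. pd2 C s y') p
          = (p + h - p) * (\<lambda>s. pd1 (pd2 C) s y') z)"
    by (rule MVT2) (use h inJ inI y' in \<open>auto intro!: D2'\<close>)
  then obtain x' where x': "p < x'" "x' < p + h"
    and ex4: "pd2 C (p+h) y' - pd2 C p y' = h * pd1 (pd2 C) x' y'"
    by auto
  have "h * (h * pd2 (pd1 C) x y) = h * (h * pd1 (pd2 C) x' y')"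
    using ex1 ex2 ex3 ex4 by (simp add: algebra_simps)
  then have "pd2 (pd1 C) x y = pd1 (pd2 C) x' y'" using h by simp
  then show ?thesis using x y x' y' by auto
qed

lemma schwarz:
  assumes p: "p \<in> {0<..<1}" and q: "q \<in> {0<..<1}"
  shows "pd2 (pd1 C) p q = pd1 (pd2 C) p q"
proof (rule ccontr)
  define A where "A = (\<lambda>z. pd2 (pd1 C) (fst z) (snd z))"
  define B where "B = (\<lambda>z. pd1 (pd2 C) (fst z) (snd z))"
  assume ne: "pd2 (pd1 C) p q \<noteq> pd1 (pd2 C) p q"
  define e where "e = \<bar>A (p,q) - B (p,q)\<bar> / 2"
  have e: "e > 0" using ne unfolding e_def A_def B_def by auto
  obtain d1 where d1: "d1 > 0" "\<And>z. dist z (p,q) < d1 \<Longrightarrow> dist (A z) (A (p,q)) < e"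
    using contA[OF p q] e unfolding continuous_at_eps_delta A_def by blast
  obtain d2 where d2: "d2 > 0" "\<And>z. dist z (p,q) < d2 \<Longrightarrow> dist (B z) (B (p,q)) < e"
    using contB[OF p q] e unfolding continuous_at_eps_delta B_def by blast
  define h where "h = min (min (d1 / 4) (d2 / 4)) (min ((1 - p) / 2) ((1 - q) / 2))"
  have hh: "h \<le> d1 / 4" "h \<le> d2 / 4" "h \<le> (1 - p) / 2" "h \<le> (1 - q) / 2"
    unfolding h_def by linarith+
  have h: "0 < h" "p + h < 1" "q + h < 1" "h < d1 / 2" "h < d2 / 2"
    using d1 d2 p q hh by (auto simp: h_def)
  obtain x y x' y' where xy: "x \<in> {p<..<p+h}" "y \<in> {q<..<q+h}" "x' \<in> {p<..<p+h}" "y' \<in> {q<..<q+h}"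
    and eq: "A (x, y) = B (x', y')"
    using mvt_step[OF p q h(1-3)] unfolding A_def B_def by auto
  have dd: "\<And>a b. a \<in> {p<..<p+h} \<Longrightarrow> b \<in> {q<..<q+h} \<Longrightarrow> dist (a, b) (p, q) < 2 * h"
  proof -
    fix a b assume a: "a \<in> {p<..<p+h}" and b: "b \<in> {q<..<q+h}"
    have "dist (a, b) (p, q) = norm (a - p, b - q)" by (simp add: dist_norm)
    also have "\<dots> \<le> norm (a - p) + norm (b - q)" by (rule norm_Pair_le)
    also have "\<dots> < 2 * h" using a b by auto
    finally show "dist (a, b) (p, q) < 2 * h" .
  qed
  have "dist (A (x, y)) (A (p,q)) < e" using d1(2) dd[OF xy(1,2)] h by auto
  moreover have "dist (B (x', y')) (B (p,q)) < e" using d2(2) dd[OF xy(3,4)] h by auto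
  ultimately have "\<bar>A (p,q) - B (p,q)\<bar> < 2 * e" using eq by (simp add: dist_real_def)
  then show False unfolding e_def by simp
qed

lemma pd1_swap: "x \<in> {0<..<1} \<Longrightarrow> y \<in> {0<..<1} \<Longrightarrow> pd1 C x y = pd2 C y x"
  using h_swap by simp

lemma dens_sym:
  assumes p: "p \<in> {0<..<1}" and q: "q \<in> {0<..<1}"
  shows "copula_density C p q = copula_density C q p"
proof -
  have "copula_density C p q = deriv (\<lambda>t. pd1 C p t) q"
    unfolding copula_density_def pd2_def ..
  also have "\<dots> = deriv (\<lambda>t. pd2 C t p) q"
    by (rule deriv_local[of "{0<..<1}"]) (use p q pd1_swap in auto)
  also have "\<dots> = pd1 (pd2 C) q p" unfolding pd1_def ..
  also have "\<dots> = pd2 (pd1 C) q p" using schwarz[OF q p] by simp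
  finally show ?thesis unfolding copula_density_def .
qed

end


lemma h1_range:
  assumes "gcop (C k)" "p \<in> {0<..<1}" "q \<in> {0<..<1}"
  shows "h1 C k p q \<in> {0<..<1}"
  using gcop.h1_strict[OF assms] unfolding h1_def by auto

lemma h2_range:
  assumes "gcop (C k)" "p \<in> {0<..<1}" "q \<in> {0<..<1}"
  shows "h2 C k p q \<in> {0<..<1}"
  using gcop.h1_strict[OF assms(1) assms(3) assms(2)] gcop.h_swap[OF assms] unfolding h2_def by auto

lemma h2_h1:
  assumes "gcop (C k)" "p \<in> {0<..<1}" "q \<in> {0<..<1}"
  shows "h2 C k p q = h1 C k q p"
  using gcop.h_swap[OF assms] unfolding h2_def h1_def by auto

lemma rosen_range:
  assumes G: "\<And>k. k \<ge> 1 \<Longrightarrow> gcop (C k)"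
  shows "length u = k \<Longrightarrow> set u \<subseteq> {0<..<1} \<Longrightarrow> x \<in> {0<..<1} \<Longrightarrow> rosen C b k u x \<in> {0<..<1}"
proof (induction k arbitrary: u x b)
  case 0
  then show ?case by simp
next
  case (Suc k)
  show ?case
  proof (cases b)
    case True
    obtain a w where u: "u = a # w" using Suc.prems(1) by (cases u) auto
    have "rosen C False k w a \<in> {0<..<1}" "rosen C True k w x \<in> {0<..<1}"
      using Suc.IH Suc.prems u by auto
    then show ?thesis using True u h1_range[OF G] by simp
  next
    case False
    obtain a w where u: "u = w @ [a]" using Suc.prems(1) by (cases u rule: rev_exhaust) auto
    have "rosen C False k w x \<in> {0<..<1}" "rosen C True k w a \<in> {0<..<1}"
      using Suc.IH Suc.prems u by auto
    then show ?thesis using False u h2_range[OF G] by simp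
  qed
qed

lemma rosen_rev:
  assumes G: "\<And>k. k \<ge> 1 \<Longrightarrow> gcop (C k)"
  shows "length u = k \<Longrightarrow> set u \<subseteq> {0<..<1} \<Longrightarrow> x \<in> {0<..<1} \<Longrightarrow>
     rosen C False k (rev u) x = rosen C True k u x"
proof (induction k arbitrary: u x)
  case 0
  then show ?case by simp
next
  case (Suc k)
  obtain a w where u: "u = a # w" using Suc.prems(1) by (cases u) auto
  have w: "length w = k" "set w \<subseteq> {0<..<1}" "a \<in> {0<..<1}" using Suc.prems u by auto
  have i1: "rosen C False k (rev w) x = rosen C True k w x" using Suc.IH w Suc.prems by auto
  have i2: "rosen C False k (rev (rev w)) a = rosen C True k (rev w) a"
    using Suc.IH[of "rev w" a] w by simp
  have r1: "rosen C True k w x \<in> {0<..<1}" "rosen C False k w a \<in> {0<..<1}"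
    using rosen_range[OF G] w Suc.prems by auto
  have "rosen C False (Suc k) (rev u) x = h2 C (Suc k) (rosen C True k w x) (rosen C False k w a)"
    using u i1 i2 by simp
  also have "\<dots> = h1 C (Suc k) (rosen C False k w a) (rosen C True k w x)"
    using h2_h1[OF G r1] by simp
  also have "\<dots> = rosen C True (Suc k) u x" using u by simp
  finally show ?case .
qed


definition sterm :: "(nat \<Rightarrow> real \<Rightarrow> real \<Rightarrow> real) \<Rightarrow> real list \<Rightarrow> nat \<Rightarrow> nat \<Rightarrow> real" where
  "sterm C z k j = copula_density (C k)
          (rosen C False (k - 1) (take (k - 1) (drop (j - k) z)) (z ! (j - k - 1)))
          (rosen C True (k - 1) (take (k - 1) (drop (j - k) z)) (z ! (j - 1)))"

lemma take_drop_rev: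
  assumes "1 \<le> k" "k < j" "j \<le> length y"
  shows "take (k - 1) (drop (j - k) (rev y)) = rev (take (k - 1) (drop (length y + 1 - j) y))"
proof (rule nth_equalityI)
  show "length (take (k - 1) (drop (j - k) (rev y))) = length (rev (take (k - 1) (drop (length y + 1 - j) y)))"
    using assms by auto
  fix i assume "i < length (take (k - 1) (drop (j - k) (rev y)))"
  then have i: "i < k - 1" using assms by auto
  show "take (k - 1) (drop (j - k) (rev y)) ! i = rev (take (k - 1) (drop (length y + 1 - j) y)) ! i"
    using assms i by (simp add: rev_nth nth_take nth_drop min_def; linarith)
qed

lemma sterm_rev:
  assumes G: "\<And>k. k \<ge> 1 \<Longrightarrow> gcop (C k)" and y: "set y \<subseteq> {0<..<1}"
    and k: "1 \<le> k" "k < j" "j \<le> length y"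
  shows "sterm C (rev y) k j = sterm C y k (length y + 1 + k - j)"
proof -
  define n where "n = length y"
  define j' where "j' = n + 1 + k - j"
  define v where "v = take (k - 1) (drop (j' - k) y)"
  have j'k: "j' - k = n + 1 - j" unfolding j'_def using k n_def by auto
  have tv: "take (k - 1) (drop (j - k) (rev y)) = rev v"
    unfolding v_def j'k n_def by (rule take_drop_rev[OF k])
  have lv: "length v = k - 1" unfolding v_def j'_def n_def using k by auto
  have sv: "set v \<subseteq> {0<..<1}" unfolding v_def by (meson y set_take_subset set_drop_subset order_trans)
  have b: "rev y ! (j - k - 1) = y ! (j' - 1)"
  proof -
    have "rev y ! (j - k - 1) = y ! (length y - Suc (j - k - 1))" using k by (intro rev_nth) simp
    moreover have "length y - Suc (j - k - 1) = j' - 1" unfolding j'_def n_def using k by simp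
    ultimately show ?thesis by simp
  qed
  have c: "rev y ! (j - 1) = y ! (j' - k - 1)"
  proof -
    have "rev y ! (j - 1) = y ! (length y - Suc (j - 1))" using k by (intro rev_nth) simp
    moreover have "length y - Suc (j - 1) = j' - k - 1" unfolding j'_def n_def using k by simp
    ultimately show ?thesis by simp
  qed
  have yin: "\<And>i. i < n \<Longrightarrow> y ! i \<in> {0<..<1}" using y unfolding n_def by (meson nth_mem subsetD)
  have a1: "y ! (j' - 1) \<in> {0<..<1}" "y ! (j' - k - 1) \<in> {0<..<1}"
    using yin k unfolding j'_def n_def by auto
  have r1: "rosen C False (k - 1) (rev v) (y ! (j' - 1)) = rosen C True (k - 1) v (y ! (j' - 1))"
    by (rule rosen_rev[OF G lv sv a1(1)])
  have r2: "rosen C True (k - 1) (rev v) (y ! (j' - k - 1)) = rosen C False (k - 1) v (y ! (j' - k - 1))"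
    using rosen_rev[OF G, where u="rev v" and k="k - 1" and x="y ! (j' - k - 1)"] lv sv a1(2) by simp
  have g: "gcop (C k)" using G k by auto
  have "sterm C (rev y) k j = copula_density (C k) (rosen C True (k - 1) v (y ! (j' - 1)))
          (rosen C False (k - 1) v (y ! (j' - k - 1)))"
    unfolding sterm_def tv b c r1 r2 ..
  also have "\<dots> = copula_density (C k) (rosen C False (k - 1) v (y ! (j' - k - 1)))
          (rosen C True (k - 1) v (y ! (j' - 1)))"
    by (rule gcop.dens_sym[OF g]) (use rosen_range[OF G] lv sv a1 in auto)
  also have "\<dots> = sterm C y k j'" unfolding sterm_def v_def ..
  finally show ?thesis unfolding j'_def n_def .
qed

lemma density_rev:
  assumes G: "\<And>k. k \<ge> 1 \<Longrightarrow> gcop (C k)" and y: "set y \<subseteq> {0<..<1}"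
  shows "svine_density C (rev y) = svine_density C y"
proof -
  have "svine_density C (rev y) = (\<Prod>k\<in>{1..<length y}. \<Prod>j\<in>{k+1..length y}. sterm C (rev y) k j)"
    by (simp only: svine_density_def sterm_def length_rev)
  also have "\<dots> = (\<Prod>k\<in>{1..<length y}. \<Prod>j\<in>{k+1..length y}. sterm C y k j)"
  proof (rule prod.cong[OF refl])
    fix k assume k: "k \<in> {1..<length y}"
    show "(\<Prod>j\<in>{k+1..length y}. sterm C (rev y) k j) = (\<Prod>j\<in>{k+1..length y}. sterm C y k j)"
      apply (rule prod.reindex_bij_witness[where i="\<lambda>j. length y + 1 + k - j" and j="\<lambda>j. length y + 1 + k - j"])
      using k apply auto[4]
      subgoal for a
        by (rule sterm_rev[OF G y, symmetric]) (use k in auto)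
      done
  qed
  also have "\<dots> = svine_density C y"
    by (simp only: svine_density_def sterm_def)
  finally show ?thesis .
qed


lemma nn_integral_invol:
  assumes T: "T \<in> measurable M M" and D: "distr M M T = M" and I: "\<And>x. x \<in> space M \<Longrightarrow> T (T x) = x"
  shows "(\<integral>\<^sup>+x. f (T x) \<partial>M) = (\<integral>\<^sup>+x. f x \<partial>M)"
proof -
  have le: "(\<integral>\<^sup>+x. h (T x) \<partial>M) \<le> (\<integral>\<^sup>+x. h x \<partial>M)" for h :: "_ \<Rightarrow> ennreal"
  proof -
    have "(\<integral>\<^sup>+x. h (T x) \<partial>M) = (SUP g \<in> {g. simple_function M g \<and> g \<le> (\<lambda>x. h (T x))}. integral\<^sup>S M g)"
      by (simp add: nn_integral_def)
    also have "\<dots> \<le> (\<integral>\<^sup>+x. h x \<partial>M)"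
    proof (rule SUP_least)
      fix g assume g: "g \<in> {g. simple_function M g \<and> g \<le> (\<lambda>x. h (T x))}"
      then have sg: "simple_function M g" and gl: "\<And>x. g x \<le> h (T x)" by (auto simp: le_fun_def)
      have "integral\<^sup>S M g = integral\<^sup>N M g" using nn_integral_eq_simple_integral[OF sg] by simp
      also have "\<dots> = integral\<^sup>N (distr M M T) g" using D by simp
      also have "\<dots> = (\<integral>\<^sup>+x. g (T x) \<partial>M)"
        by (rule nn_integral_distr[OF T]) (use borel_measurable_simple_function[OF sg] in simp)
      also have "\<dots> \<le> (\<integral>\<^sup>+x. h x \<partial>M)"
        by (rule nn_integral_mono) (use gl I in metis)
      finally show "integral\<^sup>S M g \<le> (\<integral>\<^sup>+x. h x \<partial>M)" .
    qed
    finally show ?thesis .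
  qed
  have "(\<integral>\<^sup>+x. f x \<partial>M) = (\<integral>\<^sup>+x. f (T (T x)) \<partial>M)"
    by (rule nn_integral_cong) (simp add: I)
  also have "\<dots> \<le> (\<integral>\<^sup>+x. f (T x) \<partial>M)" by (rule le)
  finally show ?thesis using le[of f] by (rule antisym[rotated])
qed

definition revmap :: "nat \<Rightarrow> (nat \<Rightarrow> real) \<Rightarrow> (nat \<Rightarrow> real)" where
  "revmap n \<omega> = (\<lambda>i\<in>{..<n}. \<omega> (n - 1 - i))"

lemma revmap_meas:
  "revmap n \<in> measurable (PiM {..<n} (\<lambda>_. lborel)) (PiM {..<n} (\<lambda>_. lborel))"
  unfolding revmap_def
  by (rule measurable_restrict) (auto intro: measurable_component_singleton)

lemma revmap_invol: "x \<in> space (PiM {..<n} (\<lambda>_. lborel)) \<Longrightarrow> revmap n (revmap n x) = x"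
  unfolding revmap_def space_PiM by (auto simp: PiE_def extensional_def fun_eq_iff)

lemma revmap_distr:
  "distr (PiM {..<n} (\<lambda>_. lborel)) (PiM {..<n} (\<lambda>_. lborel)) (revmap n) = PiM {..<n} (\<lambda>_. lborel :: real measure)"
proof -
  have psf: "product_sigma_finite (\<lambda>_::nat. lborel :: real measure)"
    by (simp add: product_sigma_finite_def sigma_finite_lborel)
  show ?thesis
  proof (rule product_sigma_finite.PiM_eqI[OF psf])
    show "finite {..<n}" by simp
    show "sets (distr (PiM {..<n} (\<lambda>_. lborel)) (PiM {..<n} (\<lambda>_. lborel)) (revmap n)) = sets (PiM {..<n} (\<lambda>_. lborel :: real measure))"
      by simp
    fix A :: "nat \<Rightarrow> real set" assume A: "\<And>i. i \<in> {..<n} \<Longrightarrow> A i \<in> sets lborel"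
    have pre: "revmap n -` PiE {..<n} A \<inter> space (PiM {..<n} (\<lambda>_. lborel)) = PiE {..<n} (\<lambda>i. A (n - 1 - i))"
    proof (rule set_eqI)
      fix x :: "nat \<Rightarrow> real"
      show "x \<in> revmap n -` PiE {..<n} A \<inter> space (PiM {..<n} (\<lambda>_. lborel)) \<longleftrightarrow> x \<in> PiE {..<n} (\<lambda>i. A (n - 1 - i))"
      proof
        assume "x \<in> revmap n -` PiE {..<n} A \<inter> space (PiM {..<n} (\<lambda>_. lborel))"
        then have e: "x \<in> extensional {..<n}" and a: "\<And>i. i < n \<Longrightarrow> x (n - 1 - i) \<in> A i"
          unfolding revmap_def space_PiM by (auto simp: PiE_def Pi_def)
        have "\<And>i. i < n \<Longrightarrow> x i \<in> A (n - 1 - i)"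
        proof -
          fix i assume "i < n"
          then show "x i \<in> A (n - 1 - i)" using a[of "n - 1 - i"] by simp
        qed
        then show "x \<in> PiE {..<n} (\<lambda>i. A (n - 1 - i))" using e by (auto simp: PiE_def Pi_def)
      next
        assume x: "x \<in> PiE {..<n} (\<lambda>i. A (n - 1 - i))"
        then have e: "x \<in> extensional {..<n}" and a: "\<And>i. i < n \<Longrightarrow> x i \<in> A (n - 1 - i)"
          by (auto simp: PiE_def Pi_def)
        have "\<And>i. i < n \<Longrightarrow> x (n - 1 - i) \<in> A i"
        proof -
          fix i assume "i < n"
          then show "x (n - 1 - i) \<in> A i" using a[of "n - 1 - i"] by simp
        qed
        then show "x \<in> revmap n -` PiE {..<n} A \<inter> space (PiM {..<n} (\<lambda>_. lborel))"
          using e unfolding revmap_def space_PiM by (auto simp: PiE_def Pi_def)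
      qed
    qed
    have "emeasure (distr (PiM {..<n} (\<lambda>_. lborel)) (PiM {..<n} (\<lambda>_. lborel)) (revmap n)) (PiE {..<n} A)
        = emeasure (PiM {..<n} (\<lambda>_. lborel)) (revmap n -` PiE {..<n} A \<inter> space (PiM {..<n} (\<lambda>_. lborel)))"
      by (rule emeasure_distr[OF revmap_meas]) (use A in \<open>auto intro!: sets_PiM_I_finite\<close>)
    also have "\<dots> = emeasure (PiM {..<n} (\<lambda>_. lborel)) (PiE {..<n} (\<lambda>i. A (n - 1 - i)))"
      unfolding pre ..
    also have "\<dots> = (\<Prod>i\<in>{..<n}. emeasure lborel (A (n - 1 - i)))"
      by (rule product_sigma_finite.emeasure_PiM[OF psf]) (use A in auto)
    also have "\<dots> = (\<Prod>i\<in>{..<n}. emeasure lborel (A i))"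
      by (rule prod.reindex_bij_witness[where i="\<lambda>i. n - 1 - i" and j="\<lambda>i. n - 1 - i"]) auto
    finally show "emeasure (distr (PiM {..<n} (\<lambda>_. lborel)) (PiM {..<n} (\<lambda>_. lborel)) (revmap n)) (PiE {..<n} A)
        = (\<Prod>i\<in>{..<n}. emeasure lborel (A i))" .
  qed
qed


theorem proposition3p1:
  fixes C :: "nat \<Rightarrow> real \<Rightarrow> real \<Rightarrow> real"
  assumes copula: "\<forall>k\<ge>1. is_copula2 (C k)"
    and smooth: "\<forall>k\<ge>1. smooth_on_unit_sq (C k)"
    and dens_pos: "\<forall>k\<ge>1. \<forall>u\<in>{0<..<1}. \<forall>v\<in>{0<..<1}. copula_density (C k) u v > 0"
    and exch: "\<forall>k\<ge>1. \<forall>u\<in>{0<..<1}. \<forall>v\<in>{0<..<1}. C k u v = C k v u"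
  shows "(\<forall>k\<ge>1. \<forall>u x. length u = k \<and> set u \<subseteq> {0<..<1} \<and> x \<in> {0<..<1} \<longrightarrow>
            rosen C False k (rev u) x = rosen C True k u x)
       \<and> (\<forall>n\<ge>2. \<forall>u. length u = n \<and> set u \<subseteq> {0<..<1} \<longrightarrow>
            svine_cdf C u = svine_cdf C (rev u))"
proof
  have G: "\<And>k. k \<ge> 1 \<Longrightarrow> gcop (C k)"
    unfolding gcop_def using copula smooth dens_pos exch by auto
  show "\<forall>k\<ge>1. \<forall>u x. length u = k \<and> set u \<subseteq> {0<..<1} \<and> x \<in> {0<..<1} \<longrightarrow>
            rosen C False k (rev u) x = rosen C True k u x"
  proof (intro allI impI)
    fix k and u :: "real list" and x :: real assume "1 \<le> k" "length u = k \<and> set u \<subseteq> {0<..<1} \<and> x \<in> {0<..<1}"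
    then show "rosen C False k (rev u) x = rosen C True k u x"
      using rosen_rev[where C=C, OF G] by blast
  qed
  show "\<forall>n\<ge>2. \<forall>u. length u = n \<and> set u \<subseteq> {0<..<1} \<longrightarrow> svine_cdf C u = svine_cdf C (rev u)"
  proof (intro allI impI)
    fix n :: nat and u :: "real list" assume "2 \<le> n" and nu: "length u = n \<and> set u \<subseteq> {0<..<1}"
    then have ln: "length u = n" and su: "set u \<subseteq> {0<..<1}" by auto
    define P where "P = PiM {..<n} (\<lambda>_. lborel :: real measure)"
    define Gf where "Gf = (\<lambda>x::nat \<Rightarrow> real. indicator {x. \<forall>i<n. x i \<in> {0<..rev u ! i}} x *
              ennreal (svine_density C (map x [0..<n])))"
    have "svine_cdf C (rev u) = (\<integral>\<^sup>+x. Gf x \<partial>P)"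
      unfolding svine_cdf_def Gf_def P_def using ln by simp
    also have "\<dots> = (\<integral>\<^sup>+x. Gf (revmap n x) \<partial>P)"
      unfolding P_def by (rule nn_integral_invol[OF revmap_meas revmap_distr revmap_invol, symmetric])
    also have "\<dots> = (\<integral>\<^sup>+(x::nat \<Rightarrow> real). indicator {x. \<forall>i<n. x i \<in> {0<..u ! i}} x *
              ennreal (svine_density C (map x [0..<n])) \<partial>P)"
    proof (rule nn_integral_cong)
      fix x assume "x \<in> space P"
      have rx: "\<And>i. i < n \<Longrightarrow> revmap n x i = x (n - 1 - i)" unfolding revmap_def by simp
      have mp: "map (revmap n x) [0..<n] = rev (map x [0..<n])"
        by (rule nth_equalityI) (auto simp: rx rev_nth)
      have ru: "\<And>i. i < n \<Longrightarrow> rev u ! i = u ! (n - 1 - i)" using ln by (simp add: rev_nth)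
      have iff: "(\<forall>i<n. revmap n x i \<in> {0<..rev u ! i}) \<longleftrightarrow> (\<forall>i<n. x i \<in> {0<..u ! i})"
      proof
        assume a: "\<forall>i<n. revmap n x i \<in> {0<..rev u ! i}"
        show "\<forall>i<n. x i \<in> {0<..u ! i}"
        proof (intro allI impI)
          fix i assume i: "i < n"
          have "n - 1 - i < n" using i by simp
          then show "x i \<in> {0<..u ! i}" using a[rule_format, of "n - 1 - i"] rx ru i by simp
        qed
      next
        assume a: "\<forall>i<n. x i \<in> {0<..u ! i}"
        show "\<forall>i<n. revmap n x i \<in> {0<..rev u ! i}"
        proof (intro allI impI)
          fix i assume i: "i < n"
          have "n - 1 - i < n" using i by simp
          then show "revmap n x i \<in> {0<..rev u ! i}" using a[rule_format, of "n - 1 - i"] rx ru i by simp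
        qed
      qed
      show "Gf (revmap n x) = indicator {x. \<forall>i<n. x i \<in> {0<..u ! i}} x *
              ennreal (svine_density C (map x [0..<n]))"
      proof (cases "\<forall>i<n. x i \<in> {0<..u ! i}")
        case True
        have "set (map x [0..<n]) \<subseteq> {0<..<1}"
        proof
          fix z assume "z \<in> set (map x [0..<n])"
          then obtain i where i: "i < n" "z = x i" by auto
          have "u ! i \<in> {0<..<1}" using su ln i by (meson nth_mem subsetD)
          then show "z \<in> {0<..<1}" using True i by auto
        qed
        then have "svine_density C (rev (map x [0..<n])) = svine_density C (map x [0..<n])"
          using density_rev[of C "map x [0..<n]"] G by blast
        then show ?thesis unfolding Gf_def mp using iff True by (simp add: indicator_def)
      next
        case False
        then have "\<not> (\<forall>i<n. revmap n x i \<in> {0<..rev u ! i})" using iff by simp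
        then show ?thesis unfolding Gf_def using False by (simp only: indicator_def mem_Collect_eq if_False of_bool_eq(1) mult_zero_left)
      qed
    qed
    also have "\<dots> = svine_cdf C u"
      unfolding svine_cdf_def P_def using ln by simp
    finally show "svine_cdf C u = svine_cdf C (rev u)" by simp
  qed
qed

end
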